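(* Let $\mathcal{M}_i=(E_i,\rho_i)$, $i=1,2,3$, be $q$-matroids. Then, on the ground space $E_1\oplus E_2\oplus E_3$, $(\mathcal{M}_1\oplus\mathcal{M}_2)\oplus\mathcal{M}_3=\mathcal{M}_1\oplus(\mathcal{M}_2\oplus\mathcal{M}_3)$.
   Context: Let $\mathbb{F}=\mathbb{F}_q$. A $q$-matroid is $\mathcal{M}=(E,\rho)$, $E$ a finite-dimensional $\mathbb{F}$-vector space, $\rho$ from subspaces to $\mathbb{Z}_{\ge0}$ with $0\le\rho(V)\le\dim V$, monotone and submodular. Direct sum: for $q$-matroids $(E_1,\rho_1),(E_2,\rho_2)$ and $E=E_1\oplus E_2$ (each $E_i$ identified with its image) with projections $\pi_i:E\to E_i$, $\mathcal{M}_1\oplus\mathcal{M}_2=(E,\rho)$ where $\rho(V)=\dim V+\min_{X\le V}(\rho_1(\pi_1(X))+\rho_2(\pi_2(X))-\dim X)$. *)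

theory Defs
  imports "HOL-Analysis.Analysis"
begin

text \<open>Ground spaces are F^n, modelled as 'f^'n with 'f a finite field and 'n a finite index
type. A rank function is a map from sets of vectors to nat; the axioms are imposed on subspaces.\<close>

definition qmatroid :: "((('f::{field,finite})^('n::finite)) set \<Rightarrow> nat) \<Rightarrow> bool" where
  "qmatroid \<rho> \<longleftrightarrow>
     (\<forall>V. vec.subspace V \<longrightarrow> \<rho> V \<le> vec.dim V) \<and>
     (\<forall>U V. vec.subspace U \<and> vec.subspace V \<and> U \<subseteq> V \<longrightarrow> \<rho> U \<le> \<rho> V) \<and>
     (\<forall>U V. vec.subspace U \<and> vec.subspace V \<longrightarrow>
        \<rho> (vec.span (U \<union> V)) + \<rho> (U \<inter> V) \<le> \<rho> U + \<rho> V)"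

definition proj1 :: "'f^(('n1::finite) + ('n2::finite)) \<Rightarrow> 'f^'n1" where
  "proj1 x = (\<chi> i. x $ Inl i)"

definition proj2 :: "'f^(('n1::finite) + ('n2::finite)) \<Rightarrow> 'f^'n2" where
  "proj2 x = (\<chi> i. x $ Inr i)"

definition qm_dsum ::
  "((('f::{field,finite})^('n1::finite)) set \<Rightarrow> nat) \<Rightarrow> (('f^('n2::finite)) set \<Rightarrow> nat)
     \<Rightarrow> (('f^('n1 + 'n2)) set \<Rightarrow> nat)" where
  "qm_dsum \<rho>1 \<rho>2 V =
     nat (int (vec.dim V) +
          Min {int (\<rho>1 (proj1 ` X)) + int (\<rho>2 (proj2 ` X)) - int (vec.dim X)
               | X. vec.subspace X \<and> X \<subseteq> V})"

definition reassoc :: "'f^((('n1::finite) + ('n2::finite)) + ('n3::finite)) \<Rightarrow> 'f^('n1 + ('n2 + 'n3))" where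
  "reassoc x = (\<chi> i. x $ (case i of Inl a \<Rightarrow> Inl (Inl a)
                                 | Inr (Inl b) \<Rightarrow> Inl (Inr b)
                                 | Inr (Inr c) \<Rightarrow> Inr c))"

end

theory Submission
  imports Defs
begin

lemma lin_proj1: "Vector_Spaces.linear (*s) (*s) (proj1 :: 'f::field^('a::finite+'b::finite) \<Rightarrow> _)"
  unfolding Vector_Spaces.linear_iff by (auto simp: proj1_def vec_eq_iff vec.vector_space_axioms)

lemma lin_proj2: "Vector_Spaces.linear (*s) (*s) (proj2 :: 'f::field^('a::finite+'b::finite) \<Rightarrow> _)"
  unfolding Vector_Spaces.linear_iff by (auto simp: proj2_def vec_eq_iff vec.vector_space_axioms)

lemma lin_reassoc: "Vector_Spaces.linear (*s) (*s) (reassoc :: 'f::field^(('a::finite+'b::finite)+'c::finite) \<Rightarrow> _)"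
  unfolding Vector_Spaces.linear_iff by (auto simp: reassoc_def vec_eq_iff vec.vector_space_axioms split: sum.splits)

definition unassoc :: "'f^(('n1::finite) + (('n2::finite) + ('n3::finite))) \<Rightarrow> 'f^(('n1 + 'n2) + 'n3)" where
  "unassoc x = (\<chi> i. x $ (case i of Inl (Inl a) \<Rightarrow> Inl a
                                 | Inl (Inr b) \<Rightarrow> Inr (Inl b)
                                 | Inr c \<Rightarrow> Inr (Inr c)))"

lemma lin_unassoc: "Vector_Spaces.linear (*s) (*s) (unassoc :: 'f::field^('a::finite+('b::finite+'c::finite)) \<Rightarrow> _)"
  unfolding Vector_Spaces.linear_iff by (auto simp: unassoc_def vec_eq_iff vec.vector_space_axioms split: sum.splits)

lemma reassoc_unassoc: "reassoc (unassoc x) = x"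
  by (auto simp: reassoc_def unassoc_def vec_eq_iff split: sum.splits)

lemma unassoc_reassoc: "unassoc (reassoc x) = x"
  by (auto simp: reassoc_def unassoc_def vec_eq_iff split: sum.splits)

lemma rank_nullity:
  fixes f :: "'f::field^'a::finite \<Rightarrow> 'f^'b::finite"
  assumes lf: "Vector_Spaces.linear (*s) (*s) f" and S: "vec.subspace S"
  shows "vec.dim (f ` S) + vec.dim {x\<in>S. f x = 0} = vec.dim S"
proof -
  define K where "K = {x\<in>S. f x = 0}"
  have K: "vec.subspace K"
  proof -
    have "K = S \<inter> {x. f x = 0}" by (auto simp: K_def)
    moreover have "vec.subspace {x. f x = 0}" using vec.linear_subspace_kernel[OF lf] .
    ultimately show ?thesis using S vec.subspace_inter by auto
  qed
  obtain BK where BK: "BK \<subseteq> K" "vec.independent BK" "K \<subseteq> vec.span BK" "card BK = vec.dim K"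
    using vec.basis_exists by blast
  have "BK \<subseteq> S" using BK(1) K_def by auto
  then obtain B where B: "BK \<subseteq> B" "B \<subseteq> S" "vec.independent B" "S \<subseteq> vec.span B"
    using vec.maximal_independent_subset_extend BK(2) by metis
  have fB: "finite B" using B(3) vec.finiteI_independent by blast
  have cB: "card B = vec.dim S" using vec.basis_card_eq_dim B by blast
  define C where "C = B - BK"
  have indC: "vec.independent C" using B(3) C_def vec.independent_mono by blast
  have cC: "card C = card B - card BK" using C_def B(1) fB
    by (simp add: card_Diff_subset finite_subset)
  have cBK: "card BK \<le> card B" using B(1) fB card_mono by blast
  have spB: "vec.span B = vec.span (C \<union> BK)" using C_def B(1)
    by (metis Diff_partition sup_commute)
  have dsum: "vec.dim {x + y |x y. x \<in> vec.span C \<and> y \<in> vec.span BK} + vec.dim (vec.span C \<inter> vec.span BK)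
     = vec.dim (vec.span C) + vec.dim (vec.span BK)"
    by (rule vec.dim_sums_Int) auto
  have "{x + y |x y. x \<in> vec.span C \<and> y \<in> vec.span BK} = vec.span B"
    using spB vec.span_Un by blast
  hence "vec.dim (vec.span C \<inter> vec.span BK) = 0" using dsum
    by (simp add: vec.dim_eq_card_independent indC BK(2) B(3) cC cBK del: vec.dim_eq_0)
  hence int0: "vec.span C \<inter> vec.span BK \<subseteq> {0}" by simp
  have spCS: "vec.span C \<subseteq> S" using B(2) C_def S vec.span_minimal by blast
  have spBK: "vec.span BK \<subseteq> K" using BK(1) K vec.span_minimal by blast
  have inj: "inj_on f (vec.span C)"
  proof (rule inj_onI)
    fix x y assume xy: "x \<in> vec.span C" "y \<in> vec.span C" "f x = f y"
    have "x - y \<in> vec.span C" using xy vec.span_diff by blast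
    moreover have "f (x - y) = 0" using xy vec.linear_diff[OF lf] by simp
    hence "x - y \<in> K" using \<open>x - y \<in> vec.span C\<close> spCS K_def by auto
    hence "x - y \<in> vec.span BK" using BK(3) by blast
    ultimately show "x = y" using int0 by auto
  qed
  have img: "f ` S = f ` vec.span C"
  proof
    show "f ` vec.span C \<subseteq> f ` S" using spCS by blast
    show "f ` S \<subseteq> f ` vec.span C"
    proof
      fix z assume "z \<in> f ` S"
      then obtain x where x: "x \<in> S" "z = f x" by blast
      then have "x \<in> vec.span (C \<union> BK)" using B(4) spB by blast
      then obtain u v where uv: "x = u + v" "u \<in> vec.span C" "v \<in> vec.span BK"
        using vec.span_Un by blast
      have "f v = 0" using uv(3) spBK K_def by auto
      hence "f x = f u" using uv vec.linear_add[OF lf] by simp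
      thus "z \<in> f ` vec.span C" using x uv by blast
    qed
  qed
  have "vec.dim (f ` S) = card C"
    using img vec.dim_image_eq[OF lf, of "vec.span C"] inj
    by (simp add: vec.dim_eq_card_independent indC vec.span_span)
  thus ?thesis using cC cB BK(4) cBK K_def by simp
qed


lemma Min_eq_by_dom:
  fixes A B :: "'a::linorder set"
  assumes "finite A" "finite B" "A \<noteq> {}" "B \<noteq> {}"
    and "\<And>a. a \<in> A \<Longrightarrow> \<exists>b\<in>B. b \<le> a" and "\<And>b. b \<in> B \<Longrightarrow> \<exists>a\<in>A. a \<le> b"
  shows "Min A = Min B"
proof (rule antisym)
  obtain b where "b \<in> B" "b \<le> Min A" using assms(5)[OF Min_in[OF assms(1,3)]] by blast
  thus "Min B \<le> Min A" using Min_le[OF assms(2)] by (meson order_trans)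
next
  obtain a where "a \<in> A" "a \<le> Min B" using assms(6)[OF Min_in[OF assms(2,4)]] by blast
  thus "Min A \<le> Min B" using Min_le[OF assms(1)] by (meson order_trans)
qed

lemma sub0: "vec.subspace {0::'f::field^'n::finite}"
  by (simp add: vec.subspace_def)

lemma core:
  fixes g :: "'f::{field,finite}^'v::finite \<Rightarrow> 'f^'w::finite" and h :: "'f^'v \<Rightarrow> 'f^'u::finite"
    and inner :: "('f^'w) set \<Rightarrow> nat" and P :: "('f^'w) set \<Rightarrow> int" and \<sigma> :: "('f^'u) set \<Rightarrow> nat"
  assumes lg: "Vector_Spaces.linear (*s) (*s) g" and lh: "Vector_Spaces.linear (*s) (*s) h"
   and inner: "\<And>Y. vec.subspace Y \<Longrightarrow> int (inner Y) = int (vec.dim Y) + Min {P Z - int (vec.dim Z) | Z. vec.subspace Z \<and> Z \<subseteq> Y}"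
   and smono: "\<And>U W. vec.subspace U \<Longrightarrow> vec.subspace W \<Longrightarrow> U \<subseteq> W \<Longrightarrow> \<sigma> U \<le> \<sigma> W"
   and V: "vec.subspace V"
  shows "Min {int (inner (g`X)) + int (\<sigma> (h`X)) - int (vec.dim X) | X. vec.subspace X \<and> X \<subseteq> V}
       = Min {P (g`W) + int (\<sigma> (h`W)) - int (vec.dim W) | W. vec.subspace W \<and> W \<subseteq> V}"
proof (rule Min_eq_by_dom)
  have fin: "\<And>F Q. finite {F X | X :: ('f^'v) set. Q X}" by simp
  show "finite {int (inner (g`X)) + int (\<sigma> (h`X)) - int (vec.dim X) | X. vec.subspace X \<and> X \<subseteq> V}" by simp
  show "finite {P (g`W) + int (\<sigma> (h`W)) - int (vec.dim W) | W. vec.subspace W \<and> W \<subseteq> V}" by simp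
  have "{0} \<subseteq> V" using V vec.subspace_0 by blast
  thus "{int (inner (g`X)) + int (\<sigma> (h`X)) - int (vec.dim X) | X. vec.subspace X \<and> X \<subseteq> V} \<noteq> {}"
       "{P (g`W) + int (\<sigma> (h`W)) - int (vec.dim W) | W. vec.subspace W \<and> W \<subseteq> V} \<noteq> {}"
    using sub0 by blast+
next
  fix b assume "b \<in> {P (g`W) + int (\<sigma> (h`W)) - int (vec.dim W) | W. vec.subspace W \<and> W \<subseteq> V}"
  then obtain W where W: "vec.subspace W" "W \<subseteq> V" "b = P (g`W) + int (\<sigma> (h`W)) - int (vec.dim W)" by blast
  have sgW: "vec.subspace (g`W)" using vec.linear_subspace_image[OF lg W(1)] .
  have "Min {P Z - int (vec.dim Z) | Z. vec.subspace Z \<and> Z \<subseteq> g`W} \<le> P (g`W) - int (vec.dim (g`W))"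
    by (rule Min_le) (use sgW in auto)
  hence "int (inner (g`W)) + int (\<sigma> (h`W)) - int (vec.dim W) \<le> b"
    using inner[OF sgW] W(3) by simp
  thus "\<exists>a\<in>{int (inner (g`X)) + int (\<sigma> (h`X)) - int (vec.dim X) | X. vec.subspace X \<and> X \<subseteq> V}. a \<le> b"
    using W by blast
next
  fix a assume "a \<in> {int (inner (g`X)) + int (\<sigma> (h`X)) - int (vec.dim X) | X. vec.subspace X \<and> X \<subseteq> V}"
  then obtain X where X: "vec.subspace X" "X \<subseteq> V" "a = int (inner (g`X)) + int (\<sigma> (h`X)) - int (vec.dim X)" by blast
  have sgX: "vec.subspace (g`X)" using vec.linear_subspace_image[OF lg X(1)] .
  have "Min {P Z - int (vec.dim Z) | Z. vec.subspace Z \<and> Z \<subseteq> g`X} \<in> {P Z - int (vec.dim Z) | Z. vec.subspace Z \<and> Z \<subseteq> g`X}"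
    by (rule Min_in) (use sgX sub0 vec.subspace_0 in auto)
  then obtain Z where Z: "vec.subspace Z" "Z \<subseteq> g`X"
     "Min {P Z - int (vec.dim Z) | Z. vec.subspace Z \<and> Z \<subseteq> g`X} = P Z - int (vec.dim Z)" by auto
  define W where "W = {x\<in>X. g x \<in> Z}"
  have "W = X \<inter> g -` Z" by (auto simp: W_def)
  hence sW: "vec.subspace W" using vec.linear_subspace_vimage[OF lg Z(1)] X(1) vec.subspace_inter by auto
  have gW: "g ` W = Z"
  proof
    show "g ` W \<subseteq> Z" by (auto simp: W_def)
    show "Z \<subseteq> g ` W" using Z(2) by (force simp: W_def)
  qed
  have "0 \<in> Z" using Z(1) vec.subspace_0 by blast
  hence ker: "{x\<in>W. g x = 0} = {x\<in>X. g x = 0}" by (auto simp: W_def)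
  have rnW: "vec.dim Z + vec.dim {x\<in>X. g x = 0} = vec.dim W" using rank_nullity[OF lg sW] gW ker by simp
  have rnX: "vec.dim (g`X) + vec.dim {x\<in>X. g x = 0} = vec.dim X" using rank_nullity[OF lg X(1)] .
  have "h ` W \<subseteq> h ` X" by (auto simp: W_def)
  hence "\<sigma> (h`W) \<le> \<sigma> (h`X)" using smono vec.linear_subspace_image[OF lh] sW X(1) by blast
  hence "P (g`W) + int (\<sigma> (h`W)) - int (vec.dim W) \<le> a"
    using X(3) inner[OF sgX] Z(3) gW rnW rnX by simp
  thus "\<exists>b\<in>{P (g`W) + int (\<sigma> (h`W)) - int (vec.dim W) | W. vec.subspace W \<and> W \<subseteq> V}. b \<le> a"
    using sW X(2) W_def by blast
qed


lemma dsum_int: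
  fixes \<rho>1 :: "(('f::{field,finite})^('n1::finite)) set \<Rightarrow> nat" and \<rho>2 :: "('f^('n2::finite)) set \<Rightarrow> nat"
  assumes Y: "vec.subspace Y"
  shows "int (qm_dsum \<rho>1 \<rho>2 Y) = int (vec.dim Y) +
     Min {int (\<rho>1 (proj1 ` Z)) + int (\<rho>2 (proj2 ` Z)) - int (vec.dim Z) | Z. vec.subspace Z \<and> Z \<subseteq> Y}"
proof -
  let ?S = "{int (\<rho>1 (proj1 ` Z)) + int (\<rho>2 (proj2 ` Z)) - int (vec.dim Z) | Z. vec.subspace Z \<and> Z \<subseteq> Y}"
  have "Min ?S \<in> ?S" by (rule Min_in) (use Y sub0 vec.subspace_0 in auto)
  then obtain Z where Z: "Z \<subseteq> Y" "Min ?S = int (\<rho>1 (proj1 ` Z)) + int (\<rho>2 (proj2 ` Z)) - int (vec.dim Z)" by auto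
  have "vec.dim Z \<le> vec.dim Y" using Z(1) vec.dim_subset by blast
  hence "int (vec.dim Y) + Min ?S \<ge> 0" using Z(2) by simp
  thus ?thesis unfolding qm_dsum_def by simp
qed

lemma qm_mono: "qmatroid \<rho> \<Longrightarrow> vec.subspace U \<Longrightarrow> vec.subspace W \<Longrightarrow> U \<subseteq> W \<Longrightarrow> \<rho> U \<le> \<rho> W"
  unfolding qmatroid_def by blast

lemma pr1: "proj1 (reassoc x) = proj1 (proj1 x)"
  by (simp add: proj1_def reassoc_def vec_eq_iff)
lemma pr2: "proj1 (proj2 (reassoc x)) = proj2 (proj1 x)"
  by (simp add: proj1_def proj2_def reassoc_def vec_eq_iff)
lemma pr3: "proj2 (proj2 (reassoc x)) = proj2 x"
  by (simp add: proj2_def reassoc_def vec_eq_iff)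

theorem corollary6p3:
  fixes \<rho>1 :: "(('f::{field,finite})^('n1::finite)) set \<Rightarrow> nat"
    and \<rho>2 :: "('f^('n2::finite)) set \<Rightarrow> nat"
    and \<rho>3 :: "('f^('n3::finite)) set \<Rightarrow> nat"
  assumes "qmatroid \<rho>1" and "qmatroid \<rho>2" and "qmatroid \<rho>3"
  shows "\<forall>V :: ('f^(('n1 + 'n2) + 'n3)) set. vec.subspace V \<longrightarrow>
           qm_dsum (qm_dsum \<rho>1 \<rho>2) \<rho>3 V = qm_dsum \<rho>1 (qm_dsum \<rho>2 \<rho>3) (reassoc ` V)"
proof (intro allI impI)
  fix V :: "('f^(('n1 + 'n2) + 'n3)) set"
  assume V: "vec.subspace V"
  define U where "U = reassoc ` V"
  have U: "vec.subspace U" unfolding U_def using vec.linear_subspace_image[OF lin_reassoc V] .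
  have injr: "inj (reassoc :: 'f^(('n1 + 'n2) + 'n3) \<Rightarrow> _)"
    by (metis injI unassoc_reassoc)
  have dimr: "\<And>W :: ('f^(('n1 + 'n2) + 'n3)) set. vec.dim (reassoc ` W) = vec.dim W"
    using vec.dim_image_eq[OF lin_reassoc] injr by (meson inj_on_subset subset_UNIV)
  have L: "qm_dsum (qm_dsum \<rho>1 \<rho>2) \<rho>3 V = nat (int (vec.dim V) +
     Min {int (\<rho>1 (proj1 ` proj1 ` W)) + int (\<rho>2 (proj2 ` proj1 ` W)) + int (\<rho>3 (proj2 ` W)) - int (vec.dim W)
          | W. vec.subspace W \<and> W \<subseteq> V})"
    unfolding qm_dsum_def[of "qm_dsum \<rho>1 \<rho>2" \<rho>3]
    by (subst core[OF lin_proj1 lin_proj2, of "qm_dsum \<rho>1 \<rho>2" "\<lambda>Z. int (\<rho>1 (proj1 ` Z)) + int (\<rho>2 (proj2 ` Z))" \<rho>3 V])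
      (use dsum_int qm_mono[OF assms(3)] V in auto)
  have R0: "{int (\<rho>1 (proj1 ` X)) + int (qm_dsum \<rho>2 \<rho>3 (proj2 ` X)) - int (vec.dim X) | X. vec.subspace X \<and> X \<subseteq> U}
    = {int (qm_dsum \<rho>2 \<rho>3 (proj2 ` X)) + int (\<rho>1 (proj1 ` X)) - int (vec.dim X) | X. vec.subspace X \<and> X \<subseteq> U}"
    by (simp add: add.commute)
  have R: "qm_dsum \<rho>1 (qm_dsum \<rho>2 \<rho>3) U = nat (int (vec.dim U) +
     Min {int (\<rho>2 (proj1 ` proj2 ` W)) + int (\<rho>3 (proj2 ` proj2 ` W)) + int (\<rho>1 (proj1 ` W)) - int (vec.dim W)
          | W. vec.subspace W \<and> W \<subseteq> U})"
    unfolding qm_dsum_def[of \<rho>1 "qm_dsum \<rho>2 \<rho>3"] R0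
    by (subst core[OF lin_proj2 lin_proj1, of "qm_dsum \<rho>2 \<rho>3" "\<lambda>Z. int (\<rho>2 (proj1 ` Z)) + int (\<rho>3 (proj2 ` Z))" \<rho>1 U])
      (use dsum_int qm_mono[OF assms(1)] U in auto)
  have img: "\<And>W :: ('f^(('n1 + 'n2) + 'n3)) set. proj1 ` reassoc ` W = proj1 ` proj1 ` W \<and>
      proj1 ` proj2 ` reassoc ` W = proj2 ` proj1 ` W \<and> proj2 ` proj2 ` reassoc ` W = proj2 ` W"
    by (simp add: image_image pr1 pr2 pr3)
  have S: "{int (\<rho>2 (proj1 ` proj2 ` W)) + int (\<rho>3 (proj2 ` proj2 ` W)) + int (\<rho>1 (proj1 ` W)) - int (vec.dim W)
          | W. vec.subspace W \<and> W \<subseteq> U}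
     = {int (\<rho>1 (proj1 ` proj1 ` W)) + int (\<rho>2 (proj2 ` proj1 ` W)) + int (\<rho>3 (proj2 ` W)) - int (vec.dim W)
          | W. vec.subspace W \<and> W \<subseteq> V}" (is "?A = ?B")
  proof
    show "?A \<subseteq> ?B"
    proof
      fix t assume "t \<in> ?A"
      then obtain W' where W': "vec.subspace W'" "W' \<subseteq> U"
        "t = int (\<rho>2 (proj1 ` proj2 ` W')) + int (\<rho>3 (proj2 ` proj2 ` W')) + int (\<rho>1 (proj1 ` W')) - int (vec.dim W')"
        by blast
      define W where "W = unassoc ` W'"
      have "W' = reassoc ` W" unfolding W_def image_image reassoc_unassoc by simp
      moreover have "vec.subspace W" unfolding W_def using vec.linear_subspace_image[OF lin_unassoc W'(1)] .
      moreover have "W \<subseteq> V" using W'(2) unfolding W_def U_def by (auto simp: unassoc_reassoc)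
      ultimately show "t \<in> ?B" using W'(3) img dimr by (auto simp: add_ac)
    qed
    show "?B \<subseteq> ?A"
    proof
      fix t assume "t \<in> ?B"
      then obtain W where W: "vec.subspace W" "W \<subseteq> V"
        "t = int (\<rho>1 (proj1 ` proj1 ` W)) + int (\<rho>2 (proj2 ` proj1 ` W)) + int (\<rho>3 (proj2 ` W)) - int (vec.dim W)"
        by blast
      have "vec.subspace (reassoc ` W)" using vec.linear_subspace_image[OF lin_reassoc W(1)] .
      moreover have "reassoc ` W \<subseteq> U" using W(2) U_def by auto
      moreover have "t = int (\<rho>2 (proj1 ` proj2 ` reassoc ` W)) + int (\<rho>3 (proj2 ` proj2 ` reassoc ` W))
          + int (\<rho>1 (proj1 ` reassoc ` W)) - int (vec.dim (reassoc ` W))"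
        using W(3) img dimr by (simp add: add_ac)
      ultimately show "t \<in> ?A" by blast
    qed
  qed
  have "vec.dim U = vec.dim V" using dimr U_def by simp
  thus "qm_dsum (qm_dsum \<rho>1 \<rho>2) \<rho>3 V = qm_dsum \<rho>1 (qm_dsum \<rho>2 \<rho>3) (reassoc ` V)"
    using L R S U_def by simp
qed

end
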